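(* In the category $\mathsf{Top}$ of topological spaces and continuous maps, a space is (1) finitely generated with respect to embeddings if, and only if, it is finite; and (2) finitely generated with respect to open embeddings if, and only if, it is compact.
   Context: An embedding is an injective continuous map $m:X\to Y$ such that $X$ carries the initial topology (every open set of $X$ is $m^{-1}(U)$ for some open $U\subseteq Y$); an open embedding is an embedding with open image. For a class $\mathcal{M}$ of monomorphisms in a category $\mathcal{C}$, an object $X$ is finitely generated w.r.t. $\mathcal{M}$ if for every directed diagram $(Z_i)_{i\in I}$ (indexed by a directed poset $I$, i.e. every finite subset has an upper bound) whose connecting morphisms $z_{i,j}:Z_i\to Z_j$ lie in $\mathcal{M}$, with colimit cocone $c_i:Z_i\to Z$ in $\mathcal{C}$, every morphism $f:X\to Z$ factorizes essentially uniquely through some $c_i$: (i) there are $i\in I$ and $g:X\to Z_i$ with $f=c_i\cdot g$, and (ii) if also $g':X\to Z_i$ satisfies $f=c_i\cdot g'$, then some connecting morphism $z_{i,j}$ satisfies $z_{i,j}\cdot g=z_{i,j}\cdot g'$. *)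

theory Defs
  imports "HOL-Analysis.Analysis"
begin

definition open_embedding_map :: "'a topology \<Rightarrow> 'b topology \<Rightarrow> ('a \<Rightarrow> 'b) \<Rightarrow> bool" where
  "open_embedding_map X Y f \<longleftrightarrow> embedding_map X Y f \<and> openin Y (f ` topspace X)"

text \<open>A directed poset (I, le): le is a partial order on I and every finite
  subset of I has an upper bound in I (so in particular I is nonempty).\<close>
definition directed_poset :: "'i set \<Rightarrow> ('i \<Rightarrow> 'i \<Rightarrow> bool) \<Rightarrow> bool" where
  "directed_poset I le \<longleftrightarrow>
     (\<forall>i\<in>I. le i i) \<and>
     (\<forall>i\<in>I. \<forall>j\<in>I. \<forall>k\<in>I. le i j \<longrightarrow> le j k \<longrightarrow> le i k) \<and>
     (\<forall>i\<in>I. \<forall>j\<in>I. le i j \<longrightarrow> le j i \<longrightarrow> i = j) \<and>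
     (\<forall>F. finite F \<and> F \<subseteq> I \<longrightarrow> (\<exists>u\<in>I. \<forall>i\<in>F. le i u))"

text \<open>Morphisms are continuous maps; equality of morphisms is equality on the topspace.\<close>
definition directed_diagram ::
  "('b topology \<Rightarrow> 'b topology \<Rightarrow> ('b \<Rightarrow> 'b) \<Rightarrow> bool) \<Rightarrow>
   'i set \<Rightarrow> ('i \<Rightarrow> 'i \<Rightarrow> bool) \<Rightarrow> ('i \<Rightarrow> 'b topology) \<Rightarrow> ('i \<Rightarrow> 'i \<Rightarrow> 'b \<Rightarrow> 'b) \<Rightarrow> bool" where
  "directed_diagram M I le Z z \<longleftrightarrow>
     directed_poset I le \<and>
     (\<forall>i\<in>I. \<forall>j\<in>I. le i j \<longrightarrow> continuous_map (Z i) (Z j) (z i j) \<and> M (Z i) (Z j) (z i j)) \<and>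
     (\<forall>i\<in>I. \<forall>x\<in>topspace (Z i). z i i x = x) \<and>
     (\<forall>i\<in>I. \<forall>j\<in>I. \<forall>k\<in>I. le i j \<longrightarrow> le j k \<longrightarrow>
        (\<forall>x\<in>topspace (Z i). z j k (z i j x) = z i k x))"

text \<open>Directed colimits in Top are formed as in Set (quotient of the disjoint union by
  eventual equality) and equipped with the final topology w.r.t. the colimit maps;
  this is stated here concretely (HOL cannot quantify over all test spaces of all types).\<close>
definition directed_colimit_Top ::
  "'i set \<Rightarrow> ('i \<Rightarrow> 'i \<Rightarrow> bool) \<Rightarrow> ('i \<Rightarrow> 'b topology) \<Rightarrow> ('i \<Rightarrow> 'i \<Rightarrow> 'b \<Rightarrow> 'b) \<Rightarrow>
   'c topology \<Rightarrow> ('i \<Rightarrow> 'b \<Rightarrow> 'c) \<Rightarrow> bool" where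
  "directed_colimit_Top I le Z z C c \<longleftrightarrow>
     (\<forall>i\<in>I. continuous_map (Z i) C (c i)) \<and>
     (\<forall>i\<in>I. \<forall>j\<in>I. le i j \<longrightarrow> (\<forall>x\<in>topspace (Z i). c j (z i j x) = c i x)) \<and>
     topspace C = (\<Union>i\<in>I. c i ` topspace (Z i)) \<and>
     (\<forall>i\<in>I. \<forall>j\<in>I. \<forall>x\<in>topspace (Z i). \<forall>y\<in>topspace (Z j).
        c i x = c j y \<longrightarrow> (\<exists>k\<in>I. le i k \<and> le j k \<and> z i k x = z j k y)) \<and>
     (\<forall>U. openin C U \<longleftrightarrow>
        U \<subseteq> topspace C \<and> (\<forall>i\<in>I. openin (Z i) {x \<in> topspace (Z i). c i x \<in> U}))"

definition fin_generated ::
  "'i itself \<Rightarrow> 'c itself \<Rightarrow> ('b topology \<Rightarrow> 'b topology \<Rightarrow> ('b \<Rightarrow> 'b) \<Rightarrow> bool) \<Rightarrow>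
   'a topology \<Rightarrow> bool" where
  "fin_generated (_ :: 'i itself) (_ :: 'c itself) M X \<longleftrightarrow>
     (\<forall>(I :: 'i set) le (Z :: 'i \<Rightarrow> 'b topology) z (C :: 'c topology) c (f :: 'a \<Rightarrow> 'c).
        directed_diagram M I le Z z \<and> directed_colimit_Top I le Z z C c \<and>
        continuous_map X C f \<longrightarrow>
        (\<exists>i\<in>I. \<exists>g. continuous_map X (Z i) g \<and> (\<forall>x\<in>topspace X. f x = c i (g x))) \<and>
        (\<forall>i\<in>I. \<forall>g g'. continuous_map X (Z i) g \<and> (\<forall>x\<in>topspace X. f x = c i (g x)) \<and>
            continuous_map X (Z i) g' \<and> (\<forall>x\<in>topspace X. f x = c i (g' x)) \<longrightarrow>
            (\<exists>j\<in>I. le i j \<and> (\<forall>x\<in>topspace X. z i j (g x) = z i j (g' x)))))"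

end

theory Submission
  imports Defs
begin

definition T0 :: "'a topology" where "T0 = topology (\<lambda>U. U = {} \<or> U = UNIV)"

lemma openin_T0: "openin T0 U \<longleftrightarrow> U = {} \<or> U = UNIV"
proof -
  have "istopology (\<lambda>U::'a set. U = {} \<or> U = UNIV)"
    unfolding istopology_def by auto
  then show ?thesis unfolding T0_def by (simp add: topology_inverse')
qed

lemma openin_sub_T0: "openin (subtopology T0 V) U \<longleftrightarrow> U = {} \<or> U = V"
  unfolding openin_subtopology openin_T0 by auto

lemma topspace_T0[simp]: "topspace (T0::'a topology) = UNIV"
proof -
  have "openin T0 (UNIV::'a set)" by (simp add: openin_T0)
  then show ?thesis using openin_subset by blast
qed

lemma topspace_sub_T0[simp]: "topspace (subtopology T0 V) = V"
  by (simp add: topspace_subtopology)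

lemma emb_sub: "A \<subseteq> B \<Longrightarrow> embedding_map (subtopology Y A) (subtopology Y B) (\<lambda>x. x)"
  unfolding embedding_map_def
  by (simp add: subtopology_subtopology flip: id_def)
    (metis Int_absorb1 inf.commute inf_left_commute subtopology_restrict)

lemma emb_inj: "embedding_map A B h \<Longrightarrow> inj_on h (topspace A)"
  unfolding embedding_map_def using homeomorphic_imp_injective_map by blast

lemma emb_sp:
  assumes e: "embedding_map A B h" and u: "u \<in> topspace A" and v: "v \<in> topspace A"
    and sp: "\<forall>V. openin B V \<and> h u \<in> V \<longrightarrow> h v \<in> V"
  shows "\<forall>W. openin A W \<and> u \<in> W \<longrightarrow> v \<in> W"
proof (intro allI impI)
  fix W assume W: "openin A W \<and> u \<in> W"
  have hm: "homeomorphic_map A (subtopology B (h ` topspace A)) h"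
    using e unfolding embedding_map_def .
  have "openin (subtopology B (h ` topspace A)) (h ` W)"
    using homeomorphic_map_openness[OF hm openin_subset] W by blast
  then obtain V where V: "openin B V" "h ` W = V \<inter> h ` topspace A"
    by (auto simp: openin_subtopology)
  then have "h v \<in> h ` W" using sp W v by blast
  then obtain w where "w \<in> W" "h v = h w" by blast
  moreover have "w \<in> topspace A" using \<open>w \<in> W\<close> W openin_subset by blast
  ultimately have "v = w" using inj_onD[OF emb_inj[OF e]] v by blast
  then show "v \<in> W" using \<open>w \<in> W\<close> by simp
qed

lemma dd_po: "directed_diagram M I le Z z \<Longrightarrow> directed_poset I le"
  unfolding directed_diagram_def by (elim conjE)

lemma dd_refl: "directed_diagram M I le Z z \<Longrightarrow> i \<in> I \<Longrightarrow> le i i"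
  using dd_po unfolding directed_poset_def by fast

lemma dd_trans: "directed_diagram M I le Z z \<Longrightarrow> i \<in> I \<Longrightarrow> j \<in> I \<Longrightarrow> k \<in> I \<Longrightarrow> le i j \<Longrightarrow> le j k \<Longrightarrow> le i k"
proof -
  assume "directed_diagram M I le Z z"
  then have "\<forall>i\<in>I. \<forall>j\<in>I. \<forall>k\<in>I. le i j \<longrightarrow> le j k \<longrightarrow> le i k"
    using dd_po[OF \<open>directed_diagram M I le Z z\<close>] unfolding directed_poset_def by (elim conjE)
  then show "i \<in> I \<Longrightarrow> j \<in> I \<Longrightarrow> k \<in> I \<Longrightarrow> le i j \<Longrightarrow> le j k \<Longrightarrow> le i k" by blast
qed

lemma dd_ub: "directed_diagram M I le Z z \<Longrightarrow> finite F \<Longrightarrow> F \<subseteq> I \<Longrightarrow> \<exists>u\<in>I. \<forall>i\<in>F. le i u"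
proof -
  assume "directed_diagram M I le Z z"
  then have "\<forall>F. finite F \<and> F \<subseteq> I \<longrightarrow> (\<exists>u\<in>I. \<forall>i\<in>F. le i u)"
    using dd_po[OF \<open>directed_diagram M I le Z z\<close>] unfolding directed_poset_def by (elim conjE)
  then show "finite F \<Longrightarrow> F \<subseteq> I \<Longrightarrow> \<exists>u\<in>I. \<forall>i\<in>F. le i u" by blast
qed

lemma dd_ub2: "directed_diagram M I le Z z \<Longrightarrow> i \<in> I \<Longrightarrow> j \<in> I \<Longrightarrow> \<exists>k\<in>I. le i k \<and> le j k"
  using dd_ub[of M I le Z z "{i,j}"] by auto

lemma dd_cont: "directed_diagram M I le Z z \<Longrightarrow> i \<in> I \<Longrightarrow> j \<in> I \<Longrightarrow> le i j \<Longrightarrow> continuous_map (Z i) (Z j) (z i j)"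
  unfolding directed_diagram_def by blast

lemma dd_M: "directed_diagram M I le Z z \<Longrightarrow> i \<in> I \<Longrightarrow> j \<in> I \<Longrightarrow> le i j \<Longrightarrow> M (Z i) (Z j) (z i j)"
  unfolding directed_diagram_def by blast

lemma dd_id: "directed_diagram M I le Z z \<Longrightarrow> i \<in> I \<Longrightarrow> x \<in> topspace (Z i) \<Longrightarrow> z i i x = x"
  unfolding directed_diagram_def by blast

lemma dd_comp: "directed_diagram M I le Z z \<Longrightarrow> i \<in> I \<Longrightarrow> j \<in> I \<Longrightarrow> k \<in> I \<Longrightarrow> le i j \<Longrightarrow> le j k \<Longrightarrow>
           x \<in> topspace (Z i) \<Longrightarrow> z j k (z i j x) = z i k x"
  unfolding directed_diagram_def by blast

lemma col_cont: "directed_colimit_Top I le Z z C c \<Longrightarrow> i \<in> I \<Longrightarrow> continuous_map (Z i) C (c i)"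
  by (drule conjunct1[OF iffD1[OF directed_colimit_Top_def]]) blast

lemma col_comp: "directed_colimit_Top I le Z z C c \<Longrightarrow> i \<in> I \<Longrightarrow> j \<in> I \<Longrightarrow> le i j \<Longrightarrow> x \<in> topspace (Z i) \<Longrightarrow> c j (z i j x) = c i x"
  by (drule conjunct1[OF conjunct2[OF iffD1[OF directed_colimit_Top_def]]]) blast

lemma col_top: "directed_colimit_Top I le Z z C c \<Longrightarrow> topspace C = (\<Union>i\<in>I. c i ` topspace (Z i))"
  by (drule conjunct1[OF conjunct2[OF conjunct2[OF iffD1[OF directed_colimit_Top_def]]]])

lemma col_ident: "directed_colimit_Top I le Z z C c \<Longrightarrow> i \<in> I \<Longrightarrow> j \<in> I \<Longrightarrow> x \<in> topspace (Z i) \<Longrightarrow> y \<in> topspace (Z j) \<Longrightarrow>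
        c i x = c j y \<Longrightarrow> (\<exists>k\<in>I. le i k \<and> le j k \<and> z i k x = z j k y)"
  by (drule conjunct1[OF conjunct2[OF conjunct2[OF conjunct2[OF iffD1[OF directed_colimit_Top_def]]]]]) blast

lemma col_open: "directed_colimit_Top I le Z z C c \<Longrightarrow> openin C U \<longleftrightarrow>
        U \<subseteq> topspace C \<and> (\<forall>i\<in>I. openin (Z i) {x \<in> topspace (Z i). c i x \<in> U})"
  by (drule conjunct2[OF conjunct2[OF conjunct2[OF conjunct2[OF iffD1[OF directed_colimit_Top_def]]]]]) blast

lemma sp_reflect:
  fixes Z :: "'i \<Rightarrow> 'b topology"
  assumes dd: "directed_diagram embedding_map I le Z z" and col: "directed_colimit_Top I le Z z C c"
    and j: "j \<in> I" and b: "b \<in> topspace (Z j)" and b': "b' \<in> topspace (Z j)"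
    and spC: "\<forall>U. openin C U \<and> c j b \<in> U \<longrightarrow> c j b' \<in> U"
  shows "\<forall>W. openin (Z j) W \<and> b \<in> W \<longrightarrow> b' \<in> W"
proof (intro allI impI)
  fix W assume W0: "openin (Z j) W \<and> b \<in> W"
  show "b' \<in> W"
  proof (rule ccontr)
  assume "b' \<notin> W"
  with W0 have W: "openin (Z j) W" "b \<in> W" "b' \<notin> W" by auto
  define sp where "sp T u v \<longleftrightarrow> (\<forall>V. openin T V \<and> u \<in> V \<longrightarrow> v \<in> V)"
    for T :: "'b topology" and u v
  define U where "U = {p \<in> topspace C. \<exists>k\<in>I. \<exists>e\<in>topspace (Z k). \<exists>m\<in>I.
        c k e = p \<and> le j m \<and> le k m \<and> \<not> sp (Z m) (z k m e) (z j m b')}"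
  have zin: "z k m e \<in> topspace (Z m)" if "k \<in> I" "m \<in> I" "le k m" "e \<in> topspace (Z k)" for k m e
    using continuous_map_image_subset_topspace[OF dd_cont[OF dd that(1-3)]] that(4) by blast
  have key: "sp (Z m) (z k m e) (z j m b')"
    if "k\<in>I" "m\<in>I" "n\<in>I" "le j m" "le k m" "le m n" "e \<in> topspace (Z k)"
       "sp (Z n) (z k n e) (z j n b')" for k m n e
  proof -
    have "z m n (z k m e) = z k n e" using dd_comp[OF dd] that by blast
    moreover have "z m n (z j m b') = z j n b'" using dd_comp[OF dd] that j b' by blast
    ultimately have "sp (Z n) (z m n (z k m e)) (z m n (z j m b'))" using that(8) by simp
    then show ?thesis unfolding sp_def
      using emb_sp[OF dd_M[OF dd that(2,3,6)] zin[OF that(1,2,5,7)] zin[OF j that(2,4) b']]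
      by blast
  qed
  have "openin C U"
    unfolding col_open[OF col]
  proof (intro conjI ballI)
    show "U \<subseteq> topspace C" unfolding U_def by blast
    fix k assume k: "k \<in> I"
    show "openin (Z k) {e \<in> topspace (Z k). c k e \<in> U}"
    proof (subst openin_subopen, intro ballI)
      fix e assume e: "e \<in> {e \<in> topspace (Z k). c k e \<in> U}"
      then have et: "e \<in> topspace (Z k)" and "c k e \<in> U" by auto
      then obtain k' e' m where k': "k' \<in> I" "e' \<in> topspace (Z k')" "m \<in> I" "c k' e' = c k e"
        "le j m" "le k' m" "\<not> sp (Z m) (z k' m e') (z j m b')"
        unfolding U_def by blast
      obtain n where n: "n \<in> I" "le k' n" "le k n" "z k' n e' = z k n e"
        using col_ident[OF col k'(1) k k'(2) et k'(4)] by blast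
      obtain n' where n': "n' \<in> I" "le m n'" "le n n'" using dd_ub2[OF dd k'(3) n(1)] by blast
      have jn': "le j n'" using dd_trans[OF dd j k'(3) n'(1) k'(5) n'(2)] .
      have kn': "le k n'" using dd_trans[OF dd k n(1) n'(1) n(3) n'(3)] .
      have k'n': "le k' n'" using dd_trans[OF dd k'(1) n(1) n'(1) n(2) n'(3)] .
      have eq: "z k' n' e' = z k n' e"
        using dd_comp[OF dd k'(1) n(1) n'(1) n(2) n'(3) k'(2)] dd_comp[OF dd k n(1) n'(1) n(3) n'(3) et] n(4)
        by simp
      have "\<not> sp (Z n') (z k n' e) (z j n' b')"
      proof
        assume "sp (Z n') (z k n' e) (z j n' b')"
        then have "sp (Z n') (z k' n' e') (z j n' b')" using eq by simp
        then show False using key[OF k'(1) k'(3) n'(1) k'(5) k'(6) n'(2) k'(2)] k'(7) by blast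
      qed
      then obtain V where V: "openin (Z n') V" "z k n' e \<in> V" "z j n' b' \<notin> V"
        unfolding sp_def by blast
      define T where "T = {e'' \<in> topspace (Z k). z k n' e'' \<in> V}"
      have "openin (Z k) T" unfolding T_def
        using openin_continuous_map_preimage[OF dd_cont[OF dd k n'(1) kn'] V(1)] .
      moreover have "e \<in> T" unfolding T_def using et V(2) by blast
      moreover have "T \<subseteq> {e \<in> topspace (Z k). c k e \<in> U}"
      proof
        fix e'' assume "e'' \<in> T"
        then have e'': "e'' \<in> topspace (Z k)" "z k n' e'' \<in> V" unfolding T_def by auto
        have "c k e'' \<in> topspace C" using continuous_map_image_subset_topspace[OF col_cont[OF col k]] e''(1) by blast
        moreover have "\<not> sp (Z n') (z k n' e'') (z j n' b')" unfolding sp_def using e''(2) V(1,3) by blast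
        ultimately have "c k e'' \<in> U" unfolding U_def using k e''(1) n'(1) jn' kn' by blast
        then show "e'' \<in> {e \<in> topspace (Z k). c k e \<in> U}" using e''(1) by blast
      qed
      ultimately show "\<exists>T. openin (Z k) T \<and> e \<in> T \<and> T \<subseteq> {e \<in> topspace (Z k). c k e \<in> U}"
        by blast
    qed
  qed
  moreover have "c j b \<in> U"
  proof -
    have "c j b \<in> topspace C" using continuous_map_image_subset_topspace[OF col_cont[OF col j]] b by blast
    moreover have "\<not> sp (Z j) (z j j b) (z j j b')"
      using dd_id[OF dd j b] dd_id[OF dd j b'] W unfolding sp_def by auto
    ultimately show ?thesis unfolding U_def using j b dd_refl[OF dd j] by blast
  qed
  moreover have "c j b' \<notin> U"
  proof
    assume "c j b' \<in> U"
    then obtain k e m where k: "k \<in> I" "e \<in> topspace (Z k)" "m \<in> I" "c k e = c j b'"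
        "le j m" "le k m" "\<not> sp (Z m) (z k m e) (z j m b')"
        unfolding U_def by blast
    obtain n where n: "n \<in> I" "le k n" "le j n" "z k n e = z j n b'"
      using col_ident[OF col k(1) j k(2) b' k(4)] by blast
    obtain n' where n': "n' \<in> I" "le m n'" "le n n'" using dd_ub2[OF dd k(3) n(1)] by blast
    have eq: "z k n' e = z j n' b'"
      using dd_comp[OF dd k(1) n(1) n'(1) n(2) n'(3) k(2)] dd_comp[OF dd j n(1) n'(1) n(3) n'(3) b'] n(4)
      by simp
    have "sp (Z n') (z k n' e) (z j n' b')" unfolding sp_def eq by blast
    then show False using key[OF k(1) k(3) n'(1) k(5) k(6) n'(2) k(2)] k(7) by blast
  qed
  ultimately show False using spC by blast
  qed
qed

lemma c_inj:
  assumes dd: "directed_diagram M I le Z z" and col: "directed_colimit_Top I le Z z C c"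
    and hM: "\<forall>A B h. M A B h \<longrightarrow> inj_on h (topspace A)" and i: "i \<in> I"
  shows "inj_on (c i) (topspace (Z i))"
proof (rule inj_onI)
  fix x y assume x: "x \<in> topspace (Z i)" and y: "y \<in> topspace (Z i)" and e: "c i x = c i y"
  obtain k where k: "k \<in> I" "le i k" "z i k x = z i k y" using col_ident[OF col i i x y e] by blast
  have "inj_on (z i k) (topspace (Z i))" using hM dd_M[OF dd i k(1) k(2)] by blast
  then show "x = y" using inj_onD k(3) x y by metis
qed

lemma uniq:
  assumes dd: "directed_diagram M I le Z z" and col: "directed_colimit_Top I le Z z C c"
    and hM: "\<forall>A B h. M A B h \<longrightarrow> inj_on h (topspace A)"
  shows "\<forall>i\<in>I. \<forall>g g'. continuous_map X (Z i) g \<and> (\<forall>x\<in>topspace X. f x = c i (g x)) \<and>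
            continuous_map X (Z i) g' \<and> (\<forall>x\<in>topspace X. f x = c i (g' x)) \<longrightarrow>
            (\<exists>j\<in>I. le i j \<and> (\<forall>x\<in>topspace X. z i j (g x) = z i j (g' x)))"
proof (intro ballI allI impI)
  fix i g g' assume i: "i \<in> I" and H: "continuous_map X (Z i) g \<and> (\<forall>x\<in>topspace X. f x = c i (g x)) \<and>
            continuous_map X (Z i) g' \<and> (\<forall>x\<in>topspace X. f x = c i (g' x))"
  have "g x = g' x" if x: "x \<in> topspace X" for x
  proof -
    have "g x \<in> topspace (Z i)" "g' x \<in> topspace (Z i)" using H x continuous_map_image_subset_topspace by blast+
    moreover have "c i (g x) = c i (g' x)" using H x by metis
    ultimately show ?thesis using inj_onD[OF c_inj[OF dd col hM i]] by blast
  qed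
  then show "\<exists>j\<in>I. le i j \<and> (\<forall>x\<in>topspace X. z i j (g x) = z i j (g' x))"
    using i dd_refl[OF dd i] by auto
qed

lemma choose_g:
  assumes "\<forall>x\<in>topspace X. \<exists>b\<in>topspace (Z j). f x = c j b"
  obtains g where "\<forall>x\<in>topspace X. g x \<in> topspace (Z j) \<and> f x = c j (g x)"
proof -
  have "\<forall>x\<in>topspace X. \<exists>b. b \<in> topspace (Z j) \<and> f x = c j b" using assms by blast
  then obtain g where "\<forall>x\<in>topspace X. g x \<in> topspace (Z j) \<and> f x = c j (g x)"
    using bchoice[of "topspace X" "\<lambda>x b. b \<in> topspace (Z j) \<and> f x = c j b"] by blast
  then show ?thesis using that by blast
qed

lemma emb_inj_all: "\<forall>A B h. embedding_map A B h \<longrightarrow> inj_on h (topspace A)"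
  using emb_inj by blast

lemma part1:
  fixes X :: "'a topology"
  assumes fin: "finite (topspace X)"
  shows "fin_generated TYPE('i) TYPE('c) (embedding_map :: 'b topology \<Rightarrow> 'b topology \<Rightarrow> ('b \<Rightarrow> 'b) \<Rightarrow> bool) X"
  unfolding fin_generated_def
proof (intro allI impI, elim conjE, intro conjI)
  fix I :: "'i set" and le and Z :: "'i \<Rightarrow> 'b topology" and z and C :: "'c topology" and c and f :: "'a \<Rightarrow> 'c"
  assume dd: "directed_diagram embedding_map I le Z z" and col: "directed_colimit_Top I le Z z C c"
    and fc: "continuous_map X C f"
  show "\<forall>i\<in>I. \<forall>g g'. continuous_map X (Z i) g \<and> (\<forall>x\<in>topspace X. f x = c i (g x)) \<and>
            continuous_map X (Z i) g' \<and> (\<forall>x\<in>topspace X. f x = c i (g' x)) \<longrightarrow>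
            (\<exists>j\<in>I. le i j \<and> (\<forall>x\<in>topspace X. z i j (g x) = z i j (g' x)))"
    using uniq[OF dd col emb_inj_all] .
  have "\<forall>x\<in>topspace X. \<exists>i. i \<in> I \<and> (\<exists>a\<in>topspace (Z i). f x = c i a)"
  proof
    fix x assume "x \<in> topspace X"
    then have "f x \<in> topspace C" using continuous_map_image_subset_topspace[OF fc] by blast
    then show "\<exists>i. i \<in> I \<and> (\<exists>a\<in>topspace (Z i). f x = c i a)" unfolding col_top[OF col] by blast
  qed
  then obtain ix where ix: "\<forall>x\<in>topspace X. ix x \<in> I \<and> (\<exists>a\<in>topspace (Z (ix x)). f x = c (ix x) a)"
    using bchoice by metis
  obtain j where j: "j \<in> I" "\<forall>i\<in>ix ` topspace X. le i j"
    using dd_ub[OF dd finite_imageI[OF fin]] ix by blast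
  have "\<forall>x\<in>topspace X. \<exists>b\<in>topspace (Z j). f x = c j b"
  proof
    fix x assume x: "x \<in> topspace X"
    then obtain a where a: "a \<in> topspace (Z (ix x))" "f x = c (ix x) a" "ix x \<in> I" using ix by blast
    have l: "le (ix x) j" using j x by blast
    have "z (ix x) j a \<in> topspace (Z j)"
      using continuous_map_image_subset_topspace[OF dd_cont[OF dd a(3) j(1) l]] a(1) by blast
    moreover have "f x = c j (z (ix x) j a)" using col_comp[OF col a(3) j(1) l a(1)] a(2) by simp
    ultimately show "\<exists>b\<in>topspace (Z j). f x = c j b" by blast
  qed
  then obtain g where g: "\<forall>x\<in>topspace X. g x \<in> topspace (Z j) \<and> f x = c j (g x)"
    by (rule choose_g)
  have "continuous_map X (Z j) g"
    unfolding continuous_map_def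
  proof (intro conjI allI impI)
    show "g \<in> topspace X \<rightarrow> topspace (Z j)" using g by blast
    fix W assume W: "openin (Z j) W"
    show "openin X {x \<in> topspace X. g x \<in> W}"
    proof (subst openin_subopen, intro ballI)
      fix x assume x: "x \<in> {x \<in> topspace X. g x \<in> W}"
      define N where "N = \<Inter>{V. openin X V \<and> x \<in> V}"
      have fam: "{V. openin X V \<and> x \<in> V} \<subseteq> Pow (topspace X)" using openin_subset by blast
      have "openin X N" unfolding N_def
      proof (rule openin_Inter)
        show "finite {V. openin X V \<and> x \<in> V}" using finite_subset[OF fam] fin by blast
        show "{V. openin X V \<and> x \<in> V} \<noteq> {}" using x openin_topspace by blast
      qed auto
      moreover have "x \<in> N" unfolding N_def by blast
      moreover have "N \<subseteq> {x \<in> topspace X. g x \<in> W}"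
      proof
        fix y assume y: "y \<in> N"
        have yt: "y \<in> topspace X" using y x unfolding N_def by blast
        have "\<forall>U. openin C U \<and> c j (g x) \<in> U \<longrightarrow> c j (g y) \<in> U"
        proof (intro allI impI)
          fix U assume U: "openin C U \<and> c j (g x) \<in> U"
          have "openin X {x \<in> topspace X. f x \<in> U}"
            using openin_continuous_map_preimage[OF fc] U by blast
          moreover have "x \<in> {x \<in> topspace X. f x \<in> U}" using x g U by auto
          ultimately have "y \<in> {x \<in> topspace X. f x \<in> U}" using y unfolding N_def by blast
          then show "c j (g y) \<in> U" using g yt by auto
        qed
        then have "\<forall>W. openin (Z j) W \<and> g x \<in> W \<longrightarrow> g y \<in> W"
          using sp_reflect[OF dd col j(1)] g x yt by blast
        then show "y \<in> {x \<in> topspace X. g x \<in> W}" using W x yt by blast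
      qed
      ultimately show "\<exists>T. openin X T \<and> x \<in> T \<and> T \<subseteq> {x \<in> topspace X. g x \<in> W}" by blast
    qed
  qed
  then show "\<exists>i\<in>I. \<exists>g. continuous_map X (Z i) g \<and> (\<forall>x\<in>topspace X. f x = c i (g x))"
    using j(1) g by blast
qed

lemma oemb_inj_all: "\<forall>A B h. open_embedding_map A B h \<longrightarrow> inj_on h (topspace A)"
  using emb_inj unfolding open_embedding_map_def by blast

lemma open_emb_open:
  assumes e: "open_embedding_map A B h" and W: "openin A W"
  shows "openin B (h ` W)"
proof -
  have hm: "homeomorphic_map A (subtopology B (h ` topspace A)) h"
    using e unfolding open_embedding_map_def embedding_map_def by blast
  have "openin (subtopology B (h ` topspace A)) (h ` W)"
    using homeomorphic_map_openness[OF hm openin_subset[OF W]] W by blast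
  moreover have "openin B (h ` topspace A)" using e unfolding open_embedding_map_def by blast
  ultimately show ?thesis using openin_trans_full by blast
qed

lemma open_img:
  assumes dd: "directed_diagram open_embedding_map I le Z z" and col: "directed_colimit_Top I le Z z C c"
    and j: "j \<in> I" and W: "openin (Z j) W"
  shows "openin C (c j ` W)"
  unfolding col_open[OF col]
proof (intro conjI ballI)
  have Wt: "W \<subseteq> topspace (Z j)" using openin_subset[OF W] .
  then show "c j ` W \<subseteq> topspace C"
    using continuous_map_image_subset_topspace[OF col_cont[OF col j]] by blast
  fix k assume k: "k \<in> I"
  show "openin (Z k) {e \<in> topspace (Z k). c k e \<in> c j ` W}"
  proof (subst openin_subopen, intro ballI)
    fix e assume "e \<in> {e \<in> topspace (Z k). c k e \<in> c j ` W}"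
    then obtain x where e: "e \<in> topspace (Z k)" and x: "x \<in> W" "c k e = c j x" by blast
    have xt: "x \<in> topspace (Z j)" using x Wt by blast
    obtain n where n: "n \<in> I" "le k n" "le j n" "z k n e = z j n x"
      using col_ident[OF col k j e xt x(2)] by blast
    define T where "T = {e'' \<in> topspace (Z k). z k n e'' \<in> z j n ` W}"
    have "openin (Z n) (z j n ` W)" using open_emb_open[OF dd_M[OF dd j n(1) n(3)] W] .
    then have "openin (Z k) T" unfolding T_def
      using openin_continuous_map_preimage[OF dd_cont[OF dd k n(1) n(2)]] by blast
    moreover have "e \<in> T" unfolding T_def using e x n(4) by auto
    moreover have "T \<subseteq> {e \<in> topspace (Z k). c k e \<in> c j ` W}"
    proof
      fix e'' assume "e'' \<in> T"
      then obtain x'' where e'': "e'' \<in> topspace (Z k)" "x'' \<in> W" "z k n e'' = z j n x''"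
        unfolding T_def by blast
      have "c k e'' = c n (z k n e'')" using col_comp[OF col k n(1) n(2) e''(1)] by simp
      also have "\<dots> = c n (z j n x'')" using e''(3) by simp
      also have "\<dots> = c j x''" using col_comp[OF col j n(1) n(3)] e''(2) Wt by blast
      finally show "e'' \<in> {e \<in> topspace (Z k). c k e \<in> c j ` W}" using e'' by blast
    qed
    ultimately show "\<exists>T. openin (Z k) T \<and> e \<in> T \<and> T \<subseteq> {e \<in> topspace (Z k). c k e \<in> c j ` W}"
      by blast
  qed
qed

lemma part3:
  fixes X :: "'a topology"
  assumes cpt: "compact_space X"
  shows "fin_generated TYPE('i) TYPE('c) (open_embedding_map :: 'b topology \<Rightarrow> 'b topology \<Rightarrow> ('b \<Rightarrow> 'b) \<Rightarrow> bool) X"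
  unfolding fin_generated_def
proof (intro allI impI, elim conjE, intro conjI)
  fix I :: "'i set" and le and Z :: "'i \<Rightarrow> 'b topology" and z and C :: "'c topology" and c and f :: "'a \<Rightarrow> 'c"
  assume dd: "directed_diagram open_embedding_map I le Z z" and col: "directed_colimit_Top I le Z z C c"
    and fc: "continuous_map X C f"
  show "\<forall>i\<in>I. \<forall>g g'. continuous_map X (Z i) g \<and> (\<forall>x\<in>topspace X. f x = c i (g x)) \<and>
            continuous_map X (Z i) g' \<and> (\<forall>x\<in>topspace X. f x = c i (g' x)) \<longrightarrow>
            (\<exists>j\<in>I. le i j \<and> (\<forall>x\<in>topspace X. z i j (g x) = z i j (g' x)))"
    using uniq[OF dd col oemb_inj_all] .
  have fcpt: "compactin C (f ` topspace X)"
    using image_compactin[OF cpt[unfolded compact_space_def] fc] .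
  define \<U> where "\<U> = (\<lambda>i. c i ` topspace (Z i)) ` I"
  have "\<forall>U\<in>\<U>. openin C U" unfolding \<U>_def using open_img[OF dd col] openin_topspace by blast
  moreover have "f ` topspace X \<subseteq> \<Union>\<U>"
    using continuous_map_image_subset_topspace[OF fc] col_top[OF col] unfolding \<U>_def by blast
  ultimately obtain \<F> where F: "finite \<F>" "\<F> \<subseteq> \<U>" "f ` topspace X \<subseteq> \<Union>\<F>"
    using fcpt unfolding compactin_def by meson
  obtain F where F2: "F \<subseteq> I" "finite F" "\<F> = (\<lambda>i. c i ` topspace (Z i)) ` F"
    using finite_subset_image[OF F(1) F(2)[unfolded \<U>_def]] by blast
  obtain j where j: "j \<in> I" "\<forall>i\<in>F. le i j" using dd_ub[OF dd F2(2) F2(1)] by blast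
  have "\<forall>x\<in>topspace X. \<exists>b\<in>topspace (Z j). f x = c j b"
  proof
    fix x assume x: "x \<in> topspace X"
    then obtain i a where a: "i \<in> F" "a \<in> topspace (Z i)" "f x = c i a" using F(3) F2(3) by blast
    have l: "le i j" using j a by blast
    have iI: "i \<in> I" using a F2(1) by blast
    have "z i j a \<in> topspace (Z j)"
      using continuous_map_image_subset_topspace[OF dd_cont[OF dd iI j(1) l]] a(2) by blast
    moreover have "f x = c j (z i j a)" using col_comp[OF col iI j(1) l a(2)] a(3) by simp
    ultimately show "\<exists>b\<in>topspace (Z j). f x = c j b" by blast
  qed
  then obtain g where g: "\<forall>x\<in>topspace X. g x \<in> topspace (Z j) \<and> f x = c j (g x)"
    by (rule choose_g)
  have inj: "inj_on (c j) (topspace (Z j))" using c_inj[OF dd col oemb_inj_all j(1)] .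
  have "continuous_map X (Z j) g"
    unfolding continuous_map_def
  proof (intro conjI allI impI)
    show "g \<in> topspace X \<rightarrow> topspace (Z j)" using g by blast
    fix W assume W: "openin (Z j) W"
    have Wt: "W \<subseteq> topspace (Z j)" using openin_subset[OF W] .
    have "{x \<in> topspace X. g x \<in> W} = {x \<in> topspace X. f x \<in> c j ` W}"
    proof (intro set_eqI iffI)
      fix x assume "x \<in> {x \<in> topspace X. f x \<in> c j ` W}"
      then obtain w where x: "x \<in> topspace X" "w \<in> W" "f x = c j w" by blast
      have "g x = w" using inj_onD[OF inj] g x Wt by (metis subsetD)
      then show "x \<in> {x \<in> topspace X. g x \<in> W}" using x by blast
    qed (use g in auto)
    then show "openin X {x \<in> topspace X. g x \<in> W}"
      using openin_continuous_map_preimage[OF fc open_img[OF dd col j(1) W]] by simp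
  qed
  then show "\<exists>i\<in>I. \<exists>g. continuous_map X (Z i) g \<and> (\<forall>x\<in>topspace X. f x = c i (g x))"
    using j(1) g by blast
qed

lemma cont_sub2: "continuous_map (subtopology Y A) Y (\<lambda>x. x)"
  using continuous_map_id_subt[of Y A] by (simp add: id_def)

lemma cont_sub: "A \<subseteq> B \<Longrightarrow> continuous_map (subtopology Y A) (subtopology Y B) (\<lambda>x. x)"
  unfolding continuous_map_in_subtopology using cont_sub2 by (auto simp: topspace_subtopology)

lemma part2:
  fixes X :: "'a topology"
  assumes fg: "fin_generated TYPE('a set set) TYPE('a) (embedding_map :: 'a topology \<Rightarrow> 'a topology \<Rightarrow> ('a \<Rightarrow> 'a) \<Rightarrow> bool) X"
  shows "finite (topspace X)"
proof (rule ccontr)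
  assume inf: "\<not> finite (topspace X)"
  define S where "S = topspace X"
  define I :: "'a set set set" where "I = {A. finite A \<and> A \<subseteq> (\<lambda>x. {x}) ` S}"
  define le :: "'a set set \<Rightarrow> 'a set set \<Rightarrow> bool" where "le = (\<subseteq>)"
  define Z where "Z = (\<lambda>A::'a set set. subtopology (T0::'a topology) (\<Union>A))"
  define z where "z = (\<lambda>(A::'a set set) (B::'a set set) (x::'a). x)"
  define C where "C = subtopology (T0::'a topology) S"
  define c where "c = (\<lambda>(A::'a set set) (x::'a). x)"
  have IS: "\<Union>A \<subseteq> S" if "A \<in> I" for A using that unfolding I_def by blast
  have Ifin: "finite (\<Union>A)" if "A \<in> I" for A using that unfolding I_def by auto
  have dd: "directed_diagram embedding_map I le Z z"
    unfolding directed_diagram_def directed_poset_def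
  proof (intro conjI ballI allI impI)
    fix F assume F: "finite F \<and> F \<subseteq> I"
    then have "\<Union>F \<in> I" unfolding I_def by auto
    then show "\<exists>u\<in>I. \<forall>i\<in>F. le i u" unfolding le_def by blast
  next
    fix i j assume "i \<in> I" "j \<in> I" "le i j"
    then have "\<Union>i \<subseteq> \<Union>j" unfolding le_def by blast
    then show "continuous_map (Z i) (Z j) (z i j)" "embedding_map (Z i) (Z j) (z i j)"
      unfolding Z_def z_def by (rule cont_sub, rule emb_sub)
  qed (auto simp: le_def z_def)
  have col: "directed_colimit_Top I le Z z C c"
    unfolding directed_colimit_Top_def
  proof (intro conjI ballI allI impI)
    fix i assume "i \<in> I"
    then show "continuous_map (Z i) C (c i)" unfolding Z_def C_def c_def by (rule cont_sub[OF IS])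
  next
    show "topspace C = (\<Union>i\<in>I. c i ` topspace (Z i))"
    proof
      show "topspace C \<subseteq> (\<Union>i\<in>I. c i ` topspace (Z i))"
      proof
        fix x assume "x \<in> topspace C"
        then have "x \<in> S" unfolding C_def by simp
        then have "{{x}} \<in> I" unfolding I_def by auto
        moreover have "x \<in> c {{x}} ` topspace (Z {{x}})" unfolding c_def Z_def by simp
        ultimately show "x \<in> (\<Union>i\<in>I. c i ` topspace (Z i))" by (rule UN_I)
      qed
      show "(\<Union>i\<in>I. c i ` topspace (Z i)) \<subseteq> topspace C"
        unfolding c_def Z_def C_def using IS by auto
    qed
  next
    fix i j x y assume ij: "i \<in> I" "j \<in> I" and "x \<in> topspace (Z i)" "y \<in> topspace (Z j)" "c i x = c j y"
    then have "x = y" unfolding c_def by simp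
    moreover have "i \<union> j \<in> I" using ij unfolding I_def by auto
    ultimately show "\<exists>k\<in>I. le i k \<and> le j k \<and> z i k x = z j k y" unfolding le_def z_def by blast
  next
    fix U
    show "openin C U \<longleftrightarrow> U \<subseteq> topspace C \<and> (\<forall>i\<in>I. openin (Z i) {x \<in> topspace (Z i). c i x \<in> U})"
    proof
      assume "openin C U"
      then have U: "U = {} \<or> U = S" unfolding C_def openin_sub_T0 .
      show "U \<subseteq> topspace C \<and> (\<forall>i\<in>I. openin (Z i) {x \<in> topspace (Z i). c i x \<in> U})"
      proof (intro conjI ballI)
        show "U \<subseteq> topspace C" using U unfolding C_def by auto
        fix i assume i: "i \<in> I"
        have "{x \<in> topspace (Z i). c i x \<in> U} = {} \<or> {x \<in> topspace (Z i). c i x \<in> U} = \<Union>i"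
          using U IS[OF i] unfolding Z_def c_def by auto
        then show "openin (Z i) {x \<in> topspace (Z i). c i x \<in> U}" unfolding Z_def openin_sub_T0 .
      qed
    next
      assume H: "U \<subseteq> topspace C \<and> (\<forall>i\<in>I. openin (Z i) {x \<in> topspace (Z i). c i x \<in> U})"
      have "U = {} \<or> U = S"
      proof (cases "U = {}")
        case False
        then obtain x where x: "x \<in> U" by blast
        have US: "U \<subseteq> S" using H unfolding C_def by simp
        have "S \<subseteq> U"
        proof
          fix y assume y: "y \<in> S"
          have i: "{{x},{y}} \<in> I" unfolding I_def using x y US by auto
          have "openin (Z {{x},{y}}) {w \<in> topspace (Z {{x},{y}}). c {{x},{y}} w \<in> U}"
            using H i by blast
          moreover have "topspace (Z {{x},{y}}) = {x,y}" unfolding Z_def by auto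
          ultimately have "openin (subtopology T0 (\<Union>{{x},{y}})) {w \<in> {x,y}. w \<in> U}"
            unfolding c_def Z_def by metis
          then have "{w \<in> {x,y}. w \<in> U} = {} \<or> {w \<in> {x,y}. w \<in> U} = \<Union>{{x},{y}}"
            unfolding openin_sub_T0 .
          then show "y \<in> U" using x by blast
        qed
        then show ?thesis using US by blast
      qed simp
      then show "openin C U" unfolding C_def openin_sub_T0 .
    qed
  qed (auto simp: c_def z_def)
  have fc: "continuous_map X C (\<lambda>x. x)"
    unfolding continuous_map_def
  proof (intro conjI allI impI)
    show "(\<lambda>x. x) \<in> topspace X \<rightarrow> topspace C" unfolding C_def S_def by simp
    fix U assume "openin C U"
    then have "U = {} \<or> U = S" unfolding C_def openin_sub_T0 .
    then show "openin X {x \<in> topspace X. x \<in> U}" unfolding S_def by auto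
  qed
  have "(\<exists>i\<in>I. \<exists>g. continuous_map X (Z i) g \<and> (\<forall>x\<in>topspace X. x = c i (g x))) \<and> True"
    using fg[unfolded fin_generated_def, rule_format, OF conjI[OF dd conjI[OF col fc]]] by blast
  then obtain i g where i: "i \<in> I" and g: "continuous_map X (Z i) g" "\<forall>x\<in>topspace X. x = c i (g x)"
    by blast
  have "S \<subseteq> \<Union>i"
  proof
    fix x assume x: "x \<in> S"
    then have "g x \<in> topspace (Z i)" using continuous_map_image_subset_topspace[OF g(1)] unfolding S_def by blast
    then show "x \<in> \<Union>i" using g(2) x unfolding S_def Z_def c_def by simp
  qed
  then have "finite S" using Ifin[OF i] finite_subset by blast
  then show False using inf unfolding S_def by simp
qed

lemma part4:
  fixes X :: "'a topology"
  assumes fg: "fin_generated TYPE('a set set) TYPE('a) (open_embedding_map :: 'a topology \<Rightarrow> 'a topology \<Rightarrow> ('a \<Rightarrow> 'a) \<Rightarrow> bool) X"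
  shows "compact_space X"
proof (rule ccontr)
  assume "\<not> compact_space X"
  then obtain \<U> where U: "\<forall>U\<in>\<U>. openin X U" "topspace X \<subseteq> \<Union>\<U>"
    and nf: "\<not> (\<exists>\<F>. finite \<F> \<and> \<F> \<subseteq> \<U> \<and> topspace X \<subseteq> \<Union>\<F>)"
    unfolding compact_space_alt by blast
  define I :: "'a set set set" where "I = {A. finite A \<and> A \<subseteq> \<U>}"
  define le :: "'a set set \<Rightarrow> 'a set set \<Rightarrow> bool" where "le = (\<subseteq>)"
  define Z where "Z = (\<lambda>A::'a set set. subtopology X (\<Union>A))"
  define z where "z = (\<lambda>(A::'a set set) (B::'a set set) (x::'a). x)"
  define c where "c = (\<lambda>(A::'a set set) (x::'a). x)"
  have Iopen: "openin X (\<Union>A)" if "A \<in> I" for A using that U(1) unfolding I_def by blast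
  have Isub: "\<Union>A \<subseteq> topspace X" if "A \<in> I" for A using openin_subset[OF Iopen[OF that]] .
  have topZ: "topspace (Z A) = \<Union>A" if "A \<in> I" for A
    unfolding Z_def using Isub[OF that] by (auto simp: topspace_subtopology)
  have dd: "directed_diagram open_embedding_map I le Z z"
    unfolding directed_diagram_def directed_poset_def
  proof (intro conjI ballI allI impI)
    fix F assume F: "finite F \<and> F \<subseteq> I"
    then have "\<Union>F \<in> I" unfolding I_def by auto
    then show "\<exists>u\<in>I. \<forall>i\<in>F. le i u" unfolding le_def by blast
  next
    fix i j assume ij: "i \<in> I" "j \<in> I" "le i j"
    then have sub: "\<Union>i \<subseteq> \<Union>j" unfolding le_def by blast
    then show "continuous_map (Z i) (Z j) (z i j)"
      unfolding Z_def z_def by (rule cont_sub)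
    have "embedding_map (Z i) (Z j) (z i j)" unfolding Z_def z_def by (rule emb_sub[OF sub])
    moreover have "openin (Z j) (z i j ` topspace (Z i))"
    proof -
      have "z i j ` topspace (Z i) = \<Union>i \<inter> \<Union>j" unfolding z_def topZ[OF ij(1)] using sub by auto
      then show ?thesis unfolding Z_def using openin_subtopology_Int[OF Iopen[OF ij(1)]] by simp
    qed
    ultimately show "open_embedding_map (Z i) (Z j) (z i j)" unfolding open_embedding_map_def by blast
  qed (auto simp: le_def z_def)
  have col: "directed_colimit_Top I le Z z X c"
    unfolding directed_colimit_Top_def
  proof (intro conjI ballI allI impI)
    fix i assume "i \<in> I"
    show "continuous_map (Z i) X (c i)" unfolding Z_def c_def by (rule cont_sub2)
  next
    show "topspace X = (\<Union>i\<in>I. c i ` topspace (Z i))"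
    proof
      show "topspace X \<subseteq> (\<Union>i\<in>I. c i ` topspace (Z i))"
      proof
        fix x assume x: "x \<in> topspace X"
        then obtain V where V: "V \<in> \<U>" "x \<in> V" using U(2) by blast
        then have i: "{V} \<in> I" unfolding I_def by blast
        moreover have "x \<in> c {V} ` topspace (Z {V})" using topZ[OF i] V unfolding c_def by simp
        ultimately show "x \<in> (\<Union>i\<in>I. c i ` topspace (Z i))" by (rule UN_I)
      qed
      show "(\<Union>i\<in>I. c i ` topspace (Z i)) \<subseteq> topspace X"
      proof (rule UN_least)
        fix i assume i: "i \<in> I"
        show "c i ` topspace (Z i) \<subseteq> topspace X" unfolding c_def using topZ[OF i] Isub[OF i] by simp
      qed
    qed
  next
    fix i j x y assume ij: "i \<in> I" "j \<in> I" and "x \<in> topspace (Z i)" "y \<in> topspace (Z j)" "c i x = c j y"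
    then have "x = y" unfolding c_def by simp
    moreover have "i \<union> j \<in> I" using ij unfolding I_def by auto
    ultimately show "\<exists>k\<in>I. le i k \<and> le j k \<and> z i k x = z j k y" unfolding le_def z_def by blast
  next
    fix W
    show "openin X W \<longleftrightarrow> W \<subseteq> topspace X \<and> (\<forall>i\<in>I. openin (Z i) {x \<in> topspace (Z i). c i x \<in> W})"
    proof
      assume W: "openin X W"
      show "W \<subseteq> topspace X \<and> (\<forall>i\<in>I. openin (Z i) {x \<in> topspace (Z i). c i x \<in> W})"
      proof (intro conjI ballI)
        show "W \<subseteq> topspace X" using openin_subset[OF W] .
        fix i assume i: "i \<in> I"
        have "{x \<in> topspace (Z i). c i x \<in> W} = W \<inter> \<Union>i" unfolding topZ[OF i] c_def by auto
        then show "openin (Z i) {x \<in> topspace (Z i). c i x \<in> W}"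
          unfolding Z_def using openin_subtopology_Int[OF W] by simp
      qed
    next
      assume H: "W \<subseteq> topspace X \<and> (\<forall>i\<in>I. openin (Z i) {x \<in> topspace (Z i). c i x \<in> W})"
      have "W = (\<Union>V\<in>\<U>. W \<inter> V)" using H U(2) by blast
      moreover have "openin X (W \<inter> V)" if V: "V \<in> \<U>" for V
      proof -
        have i: "{V} \<in> I" using V unfolding I_def by blast
        have "openin (Z {V}) {x \<in> topspace (Z {V}). c {V} x \<in> W}" using H i by blast
        moreover have "{x \<in> topspace (Z {V}). c {V} x \<in> W} = W \<inter> V" using topZ[OF i] unfolding c_def by auto
        ultimately have "openin (subtopology X V) (W \<inter> V)" unfolding Z_def by simp
        then show ?thesis using openin_trans_full U(1) V by blast
      qed
      ultimately show "openin X W" by (metis openin_Union imageE)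
    qed
  qed (auto simp: c_def z_def)
  have fc: "continuous_map X X (\<lambda>x. x)" using continuous_map_id by (simp add: id_def)
  have "(\<exists>i\<in>I. \<exists>g. continuous_map X (Z i) g \<and> (\<forall>x\<in>topspace X. x = c i (g x))) \<and> True"
    using fg[unfolded fin_generated_def, rule_format, OF conjI[OF dd conjI[OF col fc]]] by blast
  then obtain i g where i: "i \<in> I" and g: "continuous_map X (Z i) g" "\<forall>x\<in>topspace X. x = c i (g x)"
    by blast
  have "topspace X \<subseteq> \<Union>i"
  proof
    fix x assume x: "x \<in> topspace X"
    then have "g x \<in> topspace (Z i)" using continuous_map_image_subset_topspace[OF g(1)] by blast
    then show "x \<in> \<Union>i" using g(2) x topZ[OF i] unfolding c_def by simp
  qed
  then show False using nf i unfolding I_def by blast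
qed

theorem theorem3p3:
  fixes X :: "'a topology"
  shows
   "(finite (topspace X) \<longrightarrow>
        fin_generated TYPE('i) TYPE('c) (embedding_map :: 'b topology \<Rightarrow> 'b topology \<Rightarrow> ('b \<Rightarrow> 'b) \<Rightarrow> bool) X)
    \<and> (fin_generated TYPE('a set set) TYPE('a) (embedding_map :: 'a topology \<Rightarrow> 'a topology \<Rightarrow> ('a \<Rightarrow> 'a) \<Rightarrow> bool) X
        \<longrightarrow> finite (topspace X))
    \<and> (compact_space X \<longrightarrow>
        fin_generated TYPE('i) TYPE('c) (open_embedding_map :: 'b topology \<Rightarrow> 'b topology \<Rightarrow> ('b \<Rightarrow> 'b) \<Rightarrow> bool) X)
    \<and> (fin_generated TYPE('a set set) TYPE('a) (open_embedding_map :: 'a topology \<Rightarrow> 'a topology \<Rightarrow> ('a \<Rightarrow> 'a) \<Rightarrow> bool) X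
        \<longrightarrow> compact_space X)"
  using part1 part2 part3 part4 by blast

end
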